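(* Let $N$ be an even positive integer and $\hbar=1/(2\pi N)$. Then for every $m\in\{0,\dots,N-1\}$, $XF\Phi_m^{(0,0)}=F\Phi_m^{(0,0)}$ and $YF\Phi_m^{(0,0)}=F\Phi_m^{(0,0)}$.
   Context: On $L^2(\mathbb{R})$ with $[\widehat{x},\widehat{p}]=i\hbar$, $|x\rangle_x$ are position eigen-distributions. $\Phi_m^{(0,0)}=N^{-1/2}\sum_{k\in\mathbb{Z}}|m/N+k\rangle_x$ (periodic $\delta$-comb). $X^s=e^{is\widehat{x}/\hbar}$, $Y^s=e^{is\widehat{p}/\hbar}$ for real $s$ (so $X=e^{2\pi iN\widehat{x}}$, $Y=e^{2\pi iN\widehat{p}}$). Projections $L,R,E_x,O_x$ are multiplication in position representation by the indicators of $[0,1/2)+\mathbb{Z}$, $[1/2,1)+\mathbb{Z}$, $[0,1)+2\mathbb{Z}$, $[1,2)+2\mathbb{Z}$; $B,T,E_p,O_p$ are the analogous projections in momentum representation onto $[0,1/2)+\mathbb{Z}$, $[1/2,1)+\mathbb{Z}$, $[0,1)+2\mathbb{Z}$, $[1,2)+2\mathbb{Z}$; these act on $\delta$-comb distributions by pointwise multiplication by the indicator at the support points. $S=\exp\!\left(-\frac{i\log2}{2\hbar}(\widehat{x}\widehat{p}+\widehat{p}\widehat{x})\right)$, acting on distributions by $S|x\rangle_x=\sqrt2\,|2x\rangle_x$ (so $S^\dagger\widehat{x}S=2\widehat{x}$). The propagator is $F=S(L+X^{-1}R)(E_p+Y^{-1/2}O_p)$, which the paper also writes as $(E_x+X^{-1/2}O_x)(B+Y^{-1}T)S$.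 *)

theory Defs
  imports Complex_Main
begin

text \<open>
A state that is a (possibly infinite) linear combination of position
eigen-distributions, sum over x of c(x) |x>_x, is represented by its
coefficient function c :: real => complex.  All states occurring here are
periodic delta-combs: supported on a lattice a*Z and periodic with period K*a.
\<close>

definition comb_ok :: "real \<Rightarrow> nat \<Rightarrow> (real \<Rightarrow> complex) \<Rightarrow> bool" where
  "comb_ok a K c \<longleftrightarrow> a > 0 \<and> K > 0 \<and>
     (\<forall>x. c x \<noteq> 0 \<longrightarrow> x \<in> range (\<lambda>j::int. a * of_int j)) \<and>
     (\<forall>x. c (x + real K * a) = c x)"

text \<open>Fourier transform of a periodic delta-comb (sigma = 1: position to momentum
  representation, with <p|x> = (2 pi hbar)^(-1/2) e^(-ipx/hbar); sigma = -1: the inverse).\<close>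

definition comb_ft :: "real \<Rightarrow> real \<Rightarrow> (real \<Rightarrow> complex) \<Rightarrow> real \<Rightarrow> complex" where
  "comb_ft hbar \<sigma> c p =
     (if \<exists>a K. comb_ok a K c then
        (case (SOME aK. comb_ok (fst aK) (snd aK) c) of (a, K) \<Rightarrow>
          (let b = real K * a in
            if p \<in> range (\<lambda>l::int. 2 * pi * hbar * of_int l / b) then
              complex_of_real (1 / sqrt (2 * pi * hbar) * (2 * pi * hbar / b)) *
              (\<Sum>j<K. c (real j * a) * cis (- \<sigma> * p * (real j * a) / hbar))
            else 0))
      else 0)"

definition to_mom :: "real \<Rightarrow> (real \<Rightarrow> complex) \<Rightarrow> real \<Rightarrow> complex" where
  "to_mom hbar = comb_ft hbar 1"

definition from_mom :: "real \<Rightarrow> (real \<Rightarrow> complex) \<Rightarrow> real \<Rightarrow> complex" where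
  "from_mom hbar = comb_ft hbar (-1)"

definition pos_proj :: "real set \<Rightarrow> (real \<Rightarrow> complex) \<Rightarrow> real \<Rightarrow> complex" where
  "pos_proj A c = (\<lambda>x. if x \<in> A then c x else 0)"

definition mom_proj :: "real \<Rightarrow> real set \<Rightarrow> (real \<Rightarrow> complex) \<Rightarrow> real \<Rightarrow> complex" where
  "mom_proj hbar A c = from_mom hbar (\<lambda>p. if p \<in> A then to_mom hbar c p else 0)"

definition setL :: "real set" where "setL = {x. \<exists>k::int. x - of_int k \<in> {0..<1/2}}"
definition setR :: "real set" where "setR = {x. \<exists>k::int. x - of_int k \<in> {1/2..<1}}"
definition setE :: "real set" where "setE = {x. \<exists>k::int. x - 2 * of_int k \<in> {0..<1}}"
definition setO :: "real set" where "setO = {x. \<exists>k::int. x - 2 * of_int k \<in> {1..<2}}"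

text \<open>X^s = exp(i s x / hbar), Y^s = exp(i s p / hbar) (translation: Y^s |x> = |x - s>),
  S |x> = sqrt 2 |2x>.\<close>

definition Xpow :: "real \<Rightarrow> real \<Rightarrow> (real \<Rightarrow> complex) \<Rightarrow> real \<Rightarrow> complex" where
  "Xpow hbar s c = (\<lambda>x. cis (s * x / hbar) * c x)"

definition Ypow :: "real \<Rightarrow> (real \<Rightarrow> complex) \<Rightarrow> real \<Rightarrow> complex" where
  "Ypow s c = (\<lambda>y. c (y + s))"

definition Sop :: "(real \<Rightarrow> complex) \<Rightarrow> real \<Rightarrow> complex" where
  "Sop c = (\<lambda>y. complex_of_real (sqrt 2) * c (y / 2))"

text \<open>Propagator F = S (L + X^(-1) R)(E_p + Y^(-1/2) O_p), with X = X^(2 pi N hbar),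
  Y = Y^(2 pi N hbar).\<close>

definition Fop :: "real \<Rightarrow> nat \<Rightarrow> (real \<Rightarrow> complex) \<Rightarrow> real \<Rightarrow> complex" where
  "Fop hbar N c =
     (let s = 2 * pi * real N * hbar;
          c1 = (\<lambda>x. mom_proj hbar setE c x + Ypow (- s / 2) (mom_proj hbar setO c) x)
      in Sop (\<lambda>x. pos_proj setL c1 x + Xpow hbar (- s) (pos_proj setR c1) x))"

definition Phi :: "nat \<Rightarrow> nat \<Rightarrow> real \<Rightarrow> complex" where
  "Phi N m = (\<lambda>x. if x \<in> range (\<lambda>k::int. real m / real N + of_int k)
                  then complex_of_real (1 / sqrt (real N)) else 0)"

end

theory Submission
  imports Defs
begin

lemma cis_eq_int: "a = b + 2*pi*of_int k \<Longrightarrow> cis a = cis b"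
proof -
  assume "a = b + 2*pi*of_int k"
  then have "cis a = cis b * cis (2*pi*of_int k)" by (simp only: cis_mult)
  moreover have "cis (2*pi*(of_int k::real)) = 1" by (rule cis_multiple_2pi) simp
  ultimately show ?thesis by simp
qed

definition ft :: "real \<Rightarrow> real \<Rightarrow> real \<Rightarrow> nat \<Rightarrow> (real \<Rightarrow> complex) \<Rightarrow> real \<Rightarrow> complex" where
 "ft h \<sigma> a K c p = (if p \<in> range (\<lambda>l::int. 2*pi*h*of_int l / (real K * a)) then
    complex_of_real (1 / sqrt (2*pi*h) * (2*pi*h/(real K * a))) *
    (\<Sum>j<K. c (real j * a) * cis (- \<sigma> * p * (real j * a) / h)) else 0)"

lemma comb_ok_refine:
  assumes "comb_ok a K c" "M > 0"
  shows "comb_ok (a / real M) (M*K) c"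
proof -
  have "x \<in> range (\<lambda>j::int. a / real M * of_int j)" if "c x \<noteq> 0" for x
  proof -
    have "x \<in> range (\<lambda>j::int. a * of_int j)" using assms that unfolding comb_ok_def by blast
    then obtain j :: int where "x = a * of_int j" by auto
    then have "x = a / real M * of_int (int M * j)" using assms by simp
    then show ?thesis by blast
  qed
  moreover have "real (M*K) * (a / real M) = real K * a" using assms by simp
  ultimately show ?thesis using assms unfolding comb_ok_def by auto
qed

lemma ft_refine:
  assumes ok: "comb_ok a K c" and M: "M > 0"
  shows "ft h \<sigma> (a / real M) (M*K) c p = ft h \<sigma> a K c p"
proof -
  have a: "a > 0" using ok by (simp add: comb_ok_def)
  have b: "real (M*K) * (a / real M) = real K * a" using M by simp
  define f where "f j = c (real j * (a / real M)) * cis (- \<sigma> * p * (real j * (a / real M)) / h)" for j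
  have "(\<Sum>i<K. c (real i * a) * cis (- \<sigma> * p * (real i * a) / h)) = (\<Sum>i<K. f (M*i))"
    using M by (simp add: f_def)
  also have "\<dots> = (\<Sum>j\<in>(\<lambda>i. M*i) ` {..<K}. f j)"
    by (subst sum.reindex) (use M in \<open>auto simp: inj_on_def\<close>)
  also have "\<dots> = (\<Sum>j<M*K. f j)"
  proof (rule sum.mono_neutral_left)
    show "(\<lambda>i. M*i) ` {..<K} \<subseteq> {..<M*K}" using M by auto
    show "\<forall>j\<in>{..<M*K} - (\<lambda>i. M*i) ` {..<K}. f j = 0"
    proof
      fix j assume j: "j \<in> {..<M*K} - (\<lambda>i. M*i) ` {..<K}"
      show "f j = 0"
      proof (rule ccontr)
        assume "f j \<noteq> 0"
        then have "c (real j * (a / real M)) \<noteq> 0" by (auto simp: f_def)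
        then obtain l :: int where l: "real j * (a / real M) = a * of_int l"
          using ok unfolding comb_ok_def by blast
        then have "real j = real M * of_int l" using a M by (simp add: field_simps)
        then have jl: "int j = int M * l" by (metis of_int_eq_iff of_int_mult of_int_of_nat_eq)
        then have "l \<ge> 0" using M by (smt (verit) mult_pos_neg of_nat_0_le_iff of_nat_0_less_iff)
        then have "j = M * nat l" using jl by (metis nat_int nat_mult_distrib of_nat_0_le_iff nat_int)
        moreover have "nat l < K" using j \<open>j = M * nat l\<close> M by auto
        ultimately show False using j by auto
      qed
    qed
  qed auto
  finally show ?thesis unfolding ft_def b f_def by simp
qed

lemma comb_periodic:
  assumes "comb_ok a K c"
  shows "c (x + real q * (real K * a)) = c x"
proof (induction q)
  case (Suc q)
  have "c (x + real (Suc q) * (real K * a)) = c ((x + real q * (real K * a)) + real K * a)"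
    by (simp add: algebra_simps)
  also have "\<dots> = c (x + real q * (real K * a))" using assms unfolding comb_ok_def by blast
  finally show ?case using Suc by simp
qed simp

lemma sum_blocks:
  fixes f :: "nat \<Rightarrow> 'a::comm_monoid_add"
  shows "(\<Sum>j<n*K. f j) = (\<Sum>q<n. \<Sum>i<K. f (i + q*K))"
proof -
  have "(\<Sum>j<n*K. f j) = (\<Sum>q<n. sum f {q*K..<q*K+K})"
    by (rule sum.nat_group[symmetric])
  also have "\<dots> = (\<Sum>q<n. \<Sum>i<K. f (i + q*K))"
  proof (rule sum.cong)
    fix q
    have "{q*K..<q*K+K} = {0+q*K..<K+q*K}" by (simp add: add.commute)
    then show "sum f {q*K..<q*K+K} = (\<Sum>i<K. f (i + q*K))"
      by (simp only: sum.shift_bounds_nat_ivl atLeast0LessThan)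
  qed simp
  finally show ?thesis .
qed

lemma ft_extend:
  assumes ok: "comb_ok a K c" and n: "n > 0" and h: "h > 0" and sig: "\<sigma> = of_int s" "s * s = 1"
  shows "ft h \<sigma> a (n*K) c p = ft h \<sigma> a K c p"
proof -
  define b where "b = real K * a"
  have b: "b > 0" using ok by (simp add: comb_ok_def b_def)
  define g where "g i = c (real i * a) * cis (- \<sigma> * p * (real i * a) / h)" for i
  define z where "z = cis (- \<sigma> * p * b / h)"
  define S where "S = (\<Sum>i<K. g i)"
  have sum: "(\<Sum>j<n*K. c (real j * a) * cis (- \<sigma> * p * (real j * a) / h)) = S * (\<Sum>q<n. z^q)"
  proof -
    have "(\<Sum>j<n*K. c (real j * a) * cis (- \<sigma> * p * (real j * a) / h))
        = (\<Sum>q<n. \<Sum>i<K. c (real (i + q*K) * a) * cis (- \<sigma> * p * (real (i + q*K) * a) / h))"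
      by (rule sum_blocks)
    also have "\<dots> = (\<Sum>q<n. \<Sum>i<K. g i * z^q)"
    proof (intro sum.cong refl)
      fix q i
      have e: "real (i + q*K) * a = real i * a + real q * b" by (simp add: b_def algebra_simps)
      have "c (real (i + q*K) * a) = c (real i * a)"
        unfolding e b_def by (rule comb_periodic[OF ok])
      moreover have "cis (- \<sigma> * p * (real (i + q*K) * a) / h) = cis (- \<sigma> * p * (real i * a) / h) * z^q"
        unfolding z_def DeMoivre cis_mult e using h by (intro arg_cong[where f=cis]) (simp add: field_simps)
      ultimately show "c (real (i + q*K) * a) * cis (- \<sigma> * p * (real (i + q*K) * a) / h) = g i * z^q"
        by (simp add: g_def)
    qed
    also have "\<dots> = S * (\<Sum>q<n. z^q)"
      by (simp add: S_def sum_distrib_left sum_distrib_right mult.commute)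
    finally show ?thesis .
  qed
  have bn: "real (n*K) * a = real n * b" by (simp add: b_def)
  define R1 where "R1 = range (\<lambda>l::int. 2*pi*h*of_int l / b)"
  define Rn where "Rn = range (\<lambda>l::int. 2*pi*h*of_int l / (real n * b))"
  have L: "ft h \<sigma> a (n*K) c p = (if p \<in> Rn then complex_of_real (1 / sqrt (2*pi*h) * (2*pi*h/(real n * b))) * (S * (\<Sum>q<n. z^q)) else 0)"
    unfolding ft_def bn sum Rn_def by simp
  have R: "ft h \<sigma> a K c p = (if p \<in> R1 then complex_of_real (1 / sqrt (2*pi*h) * (2*pi*h/b)) * S else 0)"
    unfolding ft_def R1_def S_def g_def b_def by simp
  have sub: "p \<in> Rn" if "p \<in> R1"
  proof -
    from that obtain l :: int where l: "p = 2*pi*h*of_int l / b" unfolding R1_def by auto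
    have "p = 2*pi*h*of_int (int n * l) / (real n * b)" using l n by simp
    then show ?thesis unfolding Rn_def by blast
  qed
  show ?thesis
  proof (cases "p \<in> R1")
    case True
    then obtain l :: int where l: "p = 2*pi*h*of_int l / b" unfolding R1_def by auto
    have "z = cis (2 * pi * of_int (- s * l))" unfolding z_def l sig using b h by (simp add: field_simps)
    then have z1: "z = 1" by (simp del: of_int_minus of_int_mult)
    have "complex_of_real (1 / sqrt (2*pi*h) * (2*pi*h/(real n * b))) * (S * of_nat n)
         = complex_of_real (1 / sqrt (2*pi*h) * (2*pi*h/(real n * b)) * real n) * S"
      by simp
    also have "1 / sqrt (2*pi*h) * (2*pi*h/(real n * b)) * real n = 1 / sqrt (2*pi*h) * (2*pi*h/b)"
      using n b by (simp add: field_simps)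
    finally show ?thesis unfolding L R using True sub z1 by simp
  next
    case False
    note nR1 = False
    show ?thesis
    proof (cases "p \<in> Rn")
      case True
      then obtain l :: int where l: "p = 2*pi*h*of_int l / (real n * b)" unfolding Rn_def by auto
      have zarg: "- \<sigma> * p * b / h = 2 * pi * (of_int (- s * l) / real n)"
        unfolding l sig using b h n by (simp add: field_simps)
      have "z ^ n = cis (2 * pi * of_int (- s * l))"
        unfolding z_def DeMoivre zarg using n by simp
      then have zn: "z ^ n = 1" by (simp del: of_int_minus of_int_mult)
      have zne: "z \<noteq> 1"
      proof
        assume "z = 1"
        then have "cos (- \<sigma> * p * b / h) = 1" unfolding z_def by (metis cis.sel(1) one_complex.sel(1))
        then obtain k :: int where k: "- \<sigma> * p * b / h = of_int k * 2 * pi" unfolding cos_one_2pi_int by blast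
        then have "pi * (- (of_int l * of_int s)) = pi * (of_int k * real n)" using n unfolding zarg by (simp add: field_simps)
        then have "- (of_int l * of_int s) = of_int k * real n" using pi_gt_zero by (metis mult_cancel_left less_irrefl)
        then have "of_int (- s * l) = real n * of_int k" by (simp add: algebra_simps)
        then have "- s * l = int n * k" by (metis of_int_eq_iff of_int_mult of_int_of_nat_eq)
        then have "s * (- s * l) = s * (int n * k)" by simp
        then have "l = - (int n * (s * k))" using sig(2) by (simp add: algebra_simps)
        then have "p = 2*pi*h*of_int (- (s * k)) / b" unfolding l using n b by (simp add: field_simps)
        then have "p \<in> R1" unfolding R1_def by blast
        then show False using nR1 by simp
      qed
      have "(\<Sum>q<n. z^q) = 0" using zn zne by (simp add: sum_gp_strict)
      then show ?thesis unfolding L R using nR1 by simp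
    next
      case False
      then show ?thesis unfolding L R using nR1 by simp
    qed
  qed
qed

lemma ft_unique:
  assumes ok1: "comb_ok a K c" and ok2: "comb_ok a' K' c" and h: "h > 0"
    and sig: "\<sigma> = of_int s" "s * s = 1"
  shows "ft h \<sigma> a K c p = ft h \<sigma> a' K' c p"
proof (cases "\<forall>x. c x = 0")
  case True
  then show ?thesis by (simp add: ft_def)
next
  case False
  then obtain x0 where x0: "c x0 \<noteq> 0" by blast
  have pos: "a > 0" "K > 0" "a' > 0" "K' > 0" using ok1 ok2 by (auto simp: comb_ok_def)
  have "x0 \<in> range (\<lambda>j::int. a' * of_int j)" using ok2 x0 unfolding comb_ok_def by blast
  then obtain i1 :: int where i1: "x0 = a' * of_int i1" by auto
  have "c (x0 + real K * a) \<noteq> 0" using ok1 x0 unfolding comb_ok_def by simp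
  then have "x0 + real K * a \<in> range (\<lambda>j::int. a' * of_int j)" using ok2 unfolding comb_ok_def by blast
  then obtain i2 :: int where i2: "x0 + real K * a = a' * of_int i2" by auto
  define t where "t = i2 - i1"
  have Kt: "real K * a = a' * of_int t" using i1 i2 unfolding t_def by (simp add: algebra_simps)
  have "a' * of_int t > 0" unfolding Kt[symmetric] using pos by simp
  then have tpos: "t > 0" using pos by (simp add: zero_less_mult_iff)
  define tn where "tn = nat t"
  have tn: "real tn = of_int t" "tn > 0" using tpos by (auto simp: tn_def)
  have aa: "a / real tn = a' / real K" using Kt pos tn by (simp add: field_simps)
  have "ft h \<sigma> a K c p = ft h \<sigma> (a / real tn) (tn*K) c p"
    by (rule ft_refine[OF ok1 tn(2), symmetric])
  also have "\<dots> = ft h \<sigma> (a / real tn) (K' * (tn*K)) c p"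
    by (rule ft_extend[OF comb_ok_refine[OF ok1 tn(2)] pos(4) h sig, symmetric])
  also have "\<dots> = ft h \<sigma> (a' / real K) (tn * (K*K')) c p"
    unfolding aa by (simp add: ac_simps)
  also have "\<dots> = ft h \<sigma> (a' / real K) (K*K') c p"
    by (rule ft_extend[OF comb_ok_refine[OF ok2 pos(2)] tn(2) h sig])
  also have "\<dots> = ft h \<sigma> a' K' c p"
    by (rule ft_refine[OF ok2 pos(2)])
  finally show ?thesis .
qed

lemma comb_ft_eq:
  assumes ok: "comb_ok a K c" and h: "h > 0" and sig: "\<sigma> = of_int s" "s * s = 1"
  shows "comb_ft h \<sigma> c p = ft h \<sigma> a K c p"
proof -
  define aK where "aK = (SOME aK. comb_ok (fst aK) (snd aK) c)"
  have "comb_ok (fst (a, K)) (snd (a, K)) c" using ok by simp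
  then have ok0: "comb_ok (fst aK) (snd aK) c" unfolding aK_def by (rule someI)
  obtain a0 K0 where aK: "aK = (a0, K0)" by (cases aK)
  have ex: "\<exists>a K. comb_ok a K c" using ok by blast
  have "comb_ft h \<sigma> c p = ft h \<sigma> a0 K0 c p"
    unfolding comb_ft_def aK_def[symmetric] using ex by (simp add: aK ft_def Let_def)
  also have "\<dots> = ft h \<sigma> a K c p"
    using ft_unique[OF _ ok h sig] ok0 aK by simp
  finally show ?thesis .
qed

lemma ft_periodic:
  assumes a: "a > 0" and K: "K > 0" and h: "h > 0" and sig: "\<sigma> = of_int s"
  shows "ft h \<sigma> a K c (p + 2*pi*h/a) = ft h \<sigma> a K c p"
proof -
  have shift: "2*pi*h/a = 2*pi*h*of_int (int K) / (real K * a)" using a K by simp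
  have rng: "p + 2*pi*h/a \<in> range (\<lambda>l::int. 2*pi*h*of_int l / (real K * a)) \<longleftrightarrow>
             p \<in> range (\<lambda>l::int. 2*pi*h*of_int l / (real K * a))"
  proof
    assume "p + 2*pi*h/a \<in> range (\<lambda>l::int. 2*pi*h*of_int l / (real K * a))"
    then obtain l :: int where "p + 2*pi*h/a = 2*pi*h*of_int l / (real K * a)" by auto
    then have "p = 2*pi*h*of_int (l - int K) / (real K * a)" unfolding shift by (simp add: diff_divide_distrib algebra_simps)
    then show "p \<in> range (\<lambda>l::int. 2*pi*h*of_int l / (real K * a))" by blast
  next
    assume "p \<in> range (\<lambda>l::int. 2*pi*h*of_int l / (real K * a))"
    then obtain l :: int where "p = 2*pi*h*of_int l / (real K * a)" by auto
    then have "p + 2*pi*h/a = 2*pi*h*of_int (l + int K) / (real K * a)" unfolding shift by (simp add: add_divide_distrib algebra_simps)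
    then show "p + 2*pi*h/a \<in> range (\<lambda>l::int. 2*pi*h*of_int l / (real K * a))" by blast
  qed
  have terms: "cis (- \<sigma> * (p + 2*pi*h/a) * (real j * a) / h) = cis (- \<sigma> * p * (real j * a) / h)" for j
    by (rule cis_eq_int[where k = "- s * int j"]) (use a h in \<open>simp add: sig field_simps\<close>)
  show ?thesis unfolding ft_def rng terms ..
qed

lemma sum_two_blocks:
  fixes f :: "nat \<Rightarrow> 'a::comm_monoid_add"
  shows "(\<Sum>j<2*N. f j) = (\<Sum>i<N. f i) + (\<Sum>i<N. f (i + N))"
  using sum_blocks[of f 2 N] by (simp add: numeral_2_eq_2)

lemma setE_small: "0 \<le> t \<Longrightarrow> t < 2 \<Longrightarrow> t \<in> setE \<longleftrightarrow> t < 1"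
proof
  assume t: "0 \<le> t" "t < 2" and "t \<in> setE"
  then obtain k :: int where k: "t - 2 * of_int k \<in> {0..<1}" unfolding setE_def by blast
  then have "of_int k < (1::real)" "of_int k > (-1::real)" using t by auto
  then have "k = 0" by linarith
  then show "t < 1" using k by simp
next
  assume "0 \<le> t" "t < 1"
  then have "t - 2 * of_int (0::int) \<in> {0..<1}" by simp
  then show "t \<in> setE" unfolding setE_def by blast
qed

lemma setO_small: "0 \<le> t \<Longrightarrow> t < 2 \<Longrightarrow> t \<in> setO \<longleftrightarrow> 1 \<le> t"
proof
  assume t: "0 \<le> t" "t < 2" and "t \<in> setO"
  then obtain k :: int where k: "t - 2 * of_int k \<in> {1..<2}" unfolding setO_def by blast
  then have "of_int k < (1::real)" "of_int k > (-1::real)" using t by auto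
  then have "k = 0" by linarith
  then show "1 \<le> t" using k by simp
next
  assume "0 \<le> t" "t < 2" "1 \<le> t"
  then have "t - 2 * of_int (0::int) \<in> {1..<2}" by simp
  then show "t \<in> setO" unfolding setO_def by blast
qed

lemma setE_shift2: "t + 2 \<in> setE \<longleftrightarrow> t \<in> setE"
proof
  assume "t + 2 \<in> setE"
  then obtain k :: int where k: "t + 2 - 2 * of_int k \<in> {0..<1}" unfolding setE_def by blast
  then have "t - 2 * of_int (k - 1) \<in> {0..<1}" by (simp add: algebra_simps)
  then show "t \<in> setE" unfolding setE_def by blast
next
  assume "t \<in> setE"
  then obtain k :: int where k: "t - 2 * of_int k \<in> {0..<1}" unfolding setE_def by blast
  then have "t + 2 - 2 * of_int (k + 1) \<in> {0..<1}" by (simp add: algebra_simps)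
  then show "t + 2 \<in> setE" unfolding setE_def by blast
qed

lemma setO_shift2: "t + 2 \<in> setO \<longleftrightarrow> t \<in> setO"
proof
  assume "t + 2 \<in> setO"
  then obtain k :: int where k: "t + 2 - 2 * of_int k \<in> {1..<2}" unfolding setO_def by blast
  then have "t - 2 * of_int (k - 1) \<in> {1..<2}" by (simp add: algebra_simps)
  then show "t \<in> setO" unfolding setO_def by blast
next
  assume "t \<in> setO"
  then obtain k :: int where k: "t - 2 * of_int k \<in> {1..<2}" unfolding setO_def by blast
  then have "t + 2 - 2 * of_int (k + 1) \<in> {1..<2}" by (simp add: algebra_simps)
  then show "t + 2 \<in> setO" unfolding setO_def by blast
qed

lemma setLR_disj: "x \<in> setL \<Longrightarrow> x \<notin> setR"
proof
  assume "x \<in> setL" "x \<in> setR"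
  then obtain k k' :: int where k: "x - of_int k \<in> {0..<1/2}" and k': "x - of_int k' \<in> {1/2..<1}"
    unfolding setL_def setR_def by blast
  then have "of_int k' - of_int k < (1::real)" "of_int k' - of_int k > (-1::real)" by auto
  then have "k = k'" by linarith
  then show False using k k' by auto
qed

lemma setL_shift: "x \<in> setL \<Longrightarrow> x + 1/2 \<in> setR"
proof -
  assume "x \<in> setL"
  then obtain k :: int where k: "x - of_int k \<in> {0..<1/2}" unfolding setL_def by blast
  then have "x + 1/2 - of_int k \<in> {1/2..<1}" by auto
  then show ?thesis unfolding setR_def by blast
qed

lemma setR_shift: "x \<in> setR \<Longrightarrow> x + 1/2 \<in> setL"
proof -
  assume "x \<in> setR"
  then obtain k :: int where k: "x - of_int k \<in> {1/2..<1}" unfolding setR_def by blast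
  then have "x + 1/2 - of_int (k + 1) \<in> {0..<1/2}" by auto
  then show ?thesis unfolding setL_def by blast
qed

lemma setLR_cover: "x \<in> setL \<or> x \<in> setR"
proof -
  have "x - of_int \<lfloor>x\<rfloor> \<in> {0..<1/2} \<or> x - of_int \<lfloor>x\<rfloor> \<in> {1/2..<1}"
    by (auto simp: floor_le_iff) (use floor_correct[of x] in linarith)+
  then show ?thesis unfolding setL_def setR_def by blast
qed

theorem mainTheorem4:
  fixes N m :: nat and hbar :: real
  assumes "N > 0" and "even N" and "hbar = 1 / (2 * pi * real N)" and "m < N"
  shows "Xpow hbar (2 * pi * real N * hbar) (Fop hbar N (Phi N m)) = Fop hbar N (Phi N m)
       \<and> Ypow (2 * pi * real N * hbar) (Fop hbar N (Phi N m)) = Fop hbar N (Phi N m)"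
proof -
  define h where "h = hbar"
  have N0: "real N > 0" using assms(1) by simp
  obtain n where n: "N = 2*n" using assms(2) by blast
  have Nn: "real N = 2 * real n" using n by simp
  have hdef: "h = 1 / (2 * pi * real N)" using assms(3) h_def by simp
  have h: "h > 0" using hdef N0 by simp
  have hN: "2*pi*h = 1 / real N" using hdef by simp
  have s1: "2*pi*real N*h = 1" using hdef N0 by simp
  have sig1: "(1::real) = of_int 1" "(1::int)*1 = 1" by simp_all
  have sig2: "(-1::real) = of_int (-1)" "(-1::int)*(-1) = 1" by simp_all
  define \<Phi> where "\<Phi> = Phi N m"
  have okPhi: "comb_ok (1/real N) N \<Phi>"
  proof -
    have supp: "x \<in> range (\<lambda>j::int. 1/real N * of_int j)" if "\<Phi> x \<noteq> 0" for x
    proof -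
      from that obtain k::int where "x = real m / real N + of_int k"
        unfolding \<Phi>_def Phi_def by (auto split: if_splits)
      then have "x = 1/real N * of_int (int m + k * int N)" using N0 by (simp add: field_simps)
      then show ?thesis by blast
    qed
    have per: "\<Phi> (x + real N * (1/real N)) = \<Phi> x" for x
    proof -
      have e: "x + real N * (1/real N) = x + 1" using N0 by simp
      have "x + 1 \<in> range (\<lambda>k::int. real m / real N + of_int k) \<longleftrightarrow> x \<in> range (\<lambda>k::int. real m / real N + of_int k)"
      proof
        assume "x + 1 \<in> range (\<lambda>k::int. real m / real N + of_int k)"
        then obtain k::int where "x + 1 = real m / real N + of_int k" by auto
        then have "x = real m / real N + of_int (k - 1)" by simp
        then show "x \<in> range (\<lambda>k::int. real m / real N + of_int k)" by blast
      next
        assume "x \<in> range (\<lambda>k::int. real m / real N + of_int k)"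
        then obtain k::int where "x = real m / real N + of_int k" by auto
        then have "x + 1 = real m / real N + of_int (k + 1)" by simp
        then show "x + 1 \<in> range (\<lambda>k::int. real m / real N + of_int k)" by blast
      qed
      then show ?thesis unfolding e \<Phi>_def Phi_def by simp
    qed
    show ?thesis unfolding comb_ok_def using supp per N0 assms(1) by auto
  qed
  define \<psi> where "\<psi> = to_mom h \<Phi>"
  have \<psi>ft: "\<psi> p = ft h 1 (1/real N) N \<Phi> p" for p
    unfolding \<psi>_def to_mom_def by (rule comb_ft_eq[OF okPhi h sig1])
  have \<psi>supp: "p \<in> range (\<lambda>j::int. 1/real N * of_int j)" if "\<psi> p \<noteq> 0" for p
  proof -
    from that have "p \<in> range (\<lambda>l::int. 2*pi*h*of_int l / (real N * (1/real N)))"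
      unfolding \<psi>ft ft_def by (auto split: if_splits)
    then obtain l::int where "p = 2*pi*h*of_int l / (real N * (1/real N))" by auto
    then have "p = 1/real N * of_int l" using N0 hN by simp
    then show ?thesis by blast
  qed
  have \<psi>per: "\<psi> (p + 1) = \<psi> p" for p
  proof -
    have "2*pi*h/(1/real N) = 1" using hN N0 by simp
    then show ?thesis using ft_periodic[OF _ _ h sig1(1), of "1/real N" N \<Phi> p] N0 assms(1)
      unfolding \<psi>ft by simp
  qed
  have \<psi>per2: "\<psi> (p + 2) = \<psi> p" for p
    using \<psi>per[of "p+1"] \<psi>per[of p] by (simp add: add.assoc)
  define cE where "cE = (\<lambda>p. if p \<in> setE then \<psi> p else 0)"
  define cO where "cO = (\<lambda>p. if p \<in> setO then \<psi> p else 0)"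
  have e2: "real (2*N) * (1/real N) = 2" using N0 by simp
  have okE: "comb_ok (1/real N) (2*N) cE"
    unfolding comb_ok_def e2 cE_def using \<psi>supp N0 assms(1) setE_shift2 \<psi>per2 by auto
  have okO: "comb_ok (1/real N) (2*N) cO"
    unfolding comb_ok_def e2 cO_def using \<psi>supp N0 assms(1) setO_shift2 \<psi>per2 by auto
  have DEft: "mom_proj h setE \<Phi> x = ft h (-1) (1/real N) (2*N) cE x" for x
    unfolding mom_proj_def from_mom_def \<psi>_def[symmetric] cE_def[symmetric]
    by (rule comb_ft_eq[OF okE h sig2])
  have DOft: "mom_proj h setO \<Phi> x = ft h (-1) (1/real N) (2*N) cO x" for x
    unfolding mom_proj_def from_mom_def \<psi>_def[symmetric] cO_def[symmetric]
    by (rule comb_ft_eq[OF okO h sig2])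
  define R2 where "R2 = range (\<lambda>l::int. of_int l / (2*real N))"
  have rng: "range (\<lambda>l::int. 2*pi*h*of_int l / (real (2*N) * (1/real N))) = R2"
  proof -
    have "(\<lambda>l::int. 2*pi*h*of_int l / (real (2*N) * (1/real N))) = (\<lambda>l::int. of_int l / (2*real N))"
      by (rule ext) (simp add: hN e2)
    then show ?thesis unfolding R2_def by (simp only:)
  qed
  have R2shift: "x + of_int d / (2*real N) \<in> R2" if "x \<in> R2" for x d
  proof -
    from that obtain l::int where "x = of_int l / (2*real N)" unfolding R2_def by auto
    then have "x + of_int d / (2*real N) = of_int (l + d) / (2*real N)" by (simp add: add_divide_distrib)
    then show ?thesis unfolding R2_def by blast
  qed
  have half: "1/2 = of_int (int N) / (2*real N)" using N0 by simp
  have R2p: "x + 1/2 \<in> R2 \<longleftrightarrow> x \<in> R2" for x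
    using R2shift[of x "int N"] R2shift[of "x + 1/2" "- int N"] unfolding half by auto
  have R2m: "x - 1/2 \<in> R2 \<longleftrightarrow> x \<in> R2" for x
    using R2p[of "x - 1/2"] by simp
  define C where "C = complex_of_real (1 / sqrt (2*pi*h) * (2*pi*h/(real (2*N) * (1/real N))))"
  have arg: "- (-1) * x * (real j * (1/real N)) / h = 2*pi*real j * x" for x j
    using N0 by (simp add: hdef field_simps)
  define W where "W i = \<psi> (real i * (1/real N))" for i
  have inE: "real i * (1/real N) \<in> setE" "real i * (1/real N) \<notin> setO" if "i < N" for i
    using setE_small[of "real i * (1/real N)"] setO_small[of "real i * (1/real N)"] that N0
    by (auto simp: field_simps)
  have inO: "real (i + N) * (1/real N) \<notin> setE" "real (i + N) * (1/real N) \<in> setO" if "i < N" for i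
    using setE_small[of "real (i + N) * (1/real N)"] setO_small[of "real (i + N) * (1/real N)"] that N0
    by (auto simp: field_simps)
  have WN: "\<psi> (real (i + N) * (1/real N)) = W i" for i
  proof -
    have "real (i + N) * (1/real N) = real i * (1/real N) + 1" using N0 by (simp add: field_simps)
    then show ?thesis unfolding W_def using \<psi>per by simp
  qed
  have DE: "mom_proj h setE \<Phi> x = (if x \<in> R2 then C * (\<Sum>i<N. W i * cis (2*pi*real i*x)) else 0)" for x
  proof -
    have "(\<Sum>j<2*N. cE (real j * (1/real N)) * cis (2*pi*real j * x)) = (\<Sum>i<N. W i * cis (2*pi*real i*x))"
      unfolding sum_two_blocks using inE inO by (simp add: cE_def W_def)
    then show ?thesis unfolding DEft ft_def rng arg C_def by simp
  qed
  have DO: "mom_proj h setO \<Phi> x = (if x \<in> R2 then C * (\<Sum>i<N. W i * cis (2*pi*real (i+N)*x)) else 0)" for x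
  proof -
    have "(\<Sum>j<2*N. cO (real j * (1/real N)) * cis (2*pi*real j * x)) = (\<Sum>i<N. W i * cis (2*pi*real (i+N)*x))"
      unfolding sum_two_blocks using inE inO WN by (simp add: cO_def)
    then show ?thesis unfolding DOft ft_def rng arg C_def by simp
  qed
  define G where "G x = C * (\<Sum>i<N. W i * (cis (2*pi*real i*x) + cis (2*pi*real (i+N)*(x - 1/2))))" for x
  define c1 where "c1 x = mom_proj h setE \<Phi> x + mom_proj h setO \<Phi> (x - 1/2)" for x
  have c1: "c1 x = (if x \<in> R2 then G x else 0)" for x
    unfolding c1_def DE DO R2m G_def by (simp add: distrib_left sum.distrib)
  have Gshift: "G (x + 1/2) = cis (2*pi*real N*x) * G x" if "x \<in> R2" for x
  proof -
    from that obtain r::int where r: "x = of_int r / (2*real N)" unfolding R2_def by auto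
    have t: "W i * (cis (2*pi*real i*(x + 1/2)) + cis (2*pi*real (i+N)*(x + 1/2 - 1/2)))
       = cis (2*pi*real N*x) * (W i * (cis (2*pi*real i*x) + cis (2*pi*real (i+N)*(x - 1/2))))" for i
    proof -
      have e1: "cis (2*pi*real (i+N)*(x + 1/2 - 1/2)) = cis (2*pi*real N*x + 2*pi*real i*x)"
        by (intro arg_cong[where f=cis]) (simp add: algebra_simps)
      have e2: "cis (2*pi*real N*x + 2*pi*real (i+N)*(x - 1/2)) = cis (2*pi*real i*(x + 1/2))"
        by (rule cis_eq_int[where k = "r - int n - int i"]) (use N0 in \<open>simp add: r Nn field_simps\<close>)
      show ?thesis unfolding e1 e2[symmetric] cis_mult[symmetric] by (simp add: algebra_simps)
    qed
    show ?thesis unfolding G_def using t by (simp add: sum_distrib_left algebra_simps)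
  qed
  define F where "F = Fop h N \<Phi>"
  have xarg: "-1 * t / h = - (2*pi*real N*t)" "1 * t / h = 2*pi*real N*t" for t
    using N0 by (simp_all add: hdef)
  have Fy: "F y = complex_of_real (sqrt 2) * ((if y/2 \<in> setL then c1 (y/2) else 0)
            + cis (- (2*pi*real N*(y/2))) * (if y/2 \<in> setR then c1 (y/2) else 0))" for y
    unfolding F_def Fop_def Let_def s1 Sop_def pos_proj_def Xpow_def Ypow_def c1_def xarg
    by simp
  have X: "Xpow h (2*pi*real N*h) F = F"
  proof
    fix y :: real
    show "Xpow h (2*pi*real N*h) F y = F y"
    proof (cases "y/2 \<in> R2")
      case True
      then obtain l::int where l: "y/2 = of_int l / (2*real N)" unfolding R2_def image_iff by blast
      have "cis (1 * y / h) = cis 0"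
        by (rule cis_eq_int[where k = l]) (use N0 l in \<open>simp add: hdef field_simps\<close>)
      then show ?thesis unfolding Xpow_def s1 by simp
    next
      case False
      then show ?thesis unfolding Xpow_def s1 Fy c1 by simp
    qed
  qed
  have Y: "Ypow (2*pi*real N*h) F = F"
  proof
    fix y :: real
    define x where "x = y/2"
    have yx: "(y + 1)/2 = x + 1/2" "y/2 = x" unfolding x_def by simp_all
    show "Ypow (2*pi*real N*h) F y = F y"
    proof (cases "x \<in> R2")
      case False
      then show ?thesis unfolding Ypow_def s1 Fy yx c1 using R2p by simp
    next
      case True
      then obtain r::int where r: "x = of_int r / (2*real N)" unfolding R2_def by auto
      have c1s: "c1 (x + 1/2) = cis (2*pi*real N*x) * c1 x"
        unfolding c1 using True R2p Gshift by simp
      show ?thesis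
      proof (cases "x \<in> setL")
        case True
        have "x \<notin> setR" "x + 1/2 \<in> setR" "x + 1/2 \<notin> setL"
          using True setLR_disj setL_shift by auto
        moreover have "cis (- (2*pi*real N*(x + 1/2))) * cis (2*pi*real N*x) = 1"
        proof -
          have "cis (- (2*pi*real N*(x + 1/2)) + 2*pi*real N*x) = cis 0"
            by (rule cis_eq_int[where k = "- int n"]) (simp add: Nn algebra_simps)
          then show ?thesis by (simp add: cis_mult)
        qed
        ultimately show ?thesis unfolding Ypow_def s1 Fy yx c1s using True
          by (simp add: mult.assoc[symmetric])
      next
        case False
        then have LR: "x \<in> setR" "x + 1/2 \<in> setL" "x + 1/2 \<notin> setR"
          using setLR_cover setR_shift setLR_disj by blast+
        have "cis (2*pi*real N*x) = cis (- (2*pi*real N*x))"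
          by (rule cis_eq_int[where k = r]) (use N0 in \<open>simp add: r field_simps\<close>)
        then show ?thesis unfolding Ypow_def s1 Fy yx c1s using False LR by simp
      qed
    qed
  qed
  show ?thesis using X Y unfolding F_def \<Phi>_def h_def by simp
qed

end
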